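(* Let $\alpha>0$ have continued fraction $[a_0;a_1,a_2,\ldots]$ with convergents $p_k/q_k$, and let $k\ge0$ be such that $a_{k+1}$ exists. Suppose $q_k=nq_k'$ with $n\in\mathbb{N}$ and $q_k'\in\mathbb{N}$, $q_k'>1$. Then $B(n\alpha)\ge n\,a_{k+1}$. Moreover, $\frac{p_k}{q_k'}$ is a convergent of $n\alpha$.
   Context: Convergents: $p_{-1}=1,q_{-1}=0,p_0=a_0,q_0=1$, $p_k=a_kp_{k-1}+p_{k-2}$, $q_k=a_kq_{k-1}+q_{k-2}$. $B(x)=\sup_{k\ge1}b_k$ where $x=[b_0;b_1,\ldots]$ (for rational $x$, a convergent is understood with respect to either of its finite expansions). *)

theory Defs
  imports Complex_Main "HOL-Library.Extended_Nat"
begin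

text \<open>For rational x this is the
  canonical finite expansion (last partial quotient at least 2 unless it is a_0).\<close>

fun cf_rem :: "real \<Rightarrow> nat \<Rightarrow> real" where
  "cf_rem x 0 = x"
| "cf_rem x (Suc n) = 1 / frac (cf_rem x n)"

definition cf_defined :: "real \<Rightarrow> nat \<Rightarrow> bool" where
  "cf_defined x n \<longleftrightarrow> (\<forall>i<n. cf_rem x i \<notin> \<int>)"

definition cf_a :: "real \<Rightarrow> nat \<Rightarrow> int" where
  "cf_a x n = \<lfloor>cf_rem x n\<rfloor>"

fun cf_p :: "real \<Rightarrow> nat \<Rightarrow> int" where
  "cf_p x 0 = cf_a x 0"
| "cf_p x (Suc 0) = cf_a x 1 * cf_a x 0 + 1"
| "cf_p x (Suc (Suc n)) = cf_a x (n + 2) * cf_p x (Suc n) + cf_p x n"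

fun cf_q :: "real \<Rightarrow> nat \<Rightarrow> int" where
  "cf_q x 0 = 1"
| "cf_q x (Suc 0) = cf_a x 1"
| "cf_q x (Suc (Suc n)) = cf_a x (n + 2) * cf_q x (Suc n) + cf_q x n"

definition cf_p_prev :: "real \<Rightarrow> nat \<Rightarrow> int" where
  "cf_p_prev x k = (if k = 0 then 1 else cf_p x (k - 1))"

definition cf_q_prev :: "real \<Rightarrow> nat \<Rightarrow> int" where
  "cf_q_prev x k = (if k = 0 then 0 else cf_q x (k - 1))"

text \<open>r is a convergent of x: either a convergent of the canonical expansion, or
  (for rational x = [b_0; ..., b_m] canonical) the extra convergent
  [b_0; ..., b_(m-1), b_m - 1] = (p_m - p_(m-1)) / (q_m - q_(m-1)) of the other finite
  expansion [b_0; ..., b_m - 1, 1].\<close>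
definition is_cf_convergent :: "real \<Rightarrow> real \<Rightarrow> bool" where
  "is_cf_convergent x r \<longleftrightarrow>
     (\<exists>j. cf_defined x j \<and> r = real_of_int (cf_p x j) / real_of_int (cf_q x j))
   \<or> (\<exists>m. cf_defined x m \<and> cf_rem x m \<in> \<int> \<and>
          r = real_of_int (cf_p x m - cf_p_prev x m) / real_of_int (cf_q x m - cf_q_prev x m))"

definition cf_B :: "real \<Rightarrow> enat" where
  "cf_B x = (SUP k \<in> {k. 1 \<le> k \<and> cf_defined x k}. enat (nat (cf_a x k)))"

end

theory Submission
  imports Defs
begin

fun P :: "(nat \<Rightarrow> int) \<Rightarrow> nat \<Rightarrow> int" where
  "P b 0 = b 0"
| "P b (Suc 0) = b 1 * b 0 + 1"
| "P b (Suc (Suc n)) = b (n + 2) * P b (Suc n) + P b n"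

fun Q :: "(nat \<Rightarrow> int) \<Rightarrow> nat \<Rightarrow> int" where
  "Q b 0 = 1"
| "Q b (Suc 0) = b 1"
| "Q b (Suc (Suc n)) = b (n + 2) * Q b (Suc n) + Q b n"

definition Pp :: "(nat \<Rightarrow> int) \<Rightarrow> nat \<Rightarrow> int" where
  "Pp b k = (if k = 0 then 1 else P b (k - 1))"
definition Qp :: "(nat \<Rightarrow> int) \<Rightarrow> nat \<Rightarrow> int" where
  "Qp b k = (if k = 0 then 0 else Q b (k - 1))"

definition V :: "(nat \<Rightarrow> int) \<Rightarrow> nat \<Rightarrow> real \<Rightarrow> real" where
  "V b k w = (of_int (P b k) * w + of_int (Pp b k)) / (of_int (Q b k) * w + of_int (Qp b k))"

lemma P_Suc: "P b (Suc k) = b (Suc k) * P b k + Pp b k"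
  by (cases k) (auto simp: Pp_def numeral_2_eq_2)

lemma Q_Suc: "Q b (Suc k) = b (Suc k) * Q b k + Qp b k"
  by (cases k) (auto simp: Qp_def numeral_2_eq_2)

lemma Pp_Suc[simp]: "Pp b (Suc k) = P b k" by (simp add: Pp_def)
lemma Qp_Suc[simp]: "Qp b (Suc k) = Q b k" by (simp add: Qp_def)

lemma cf_p_eq: "cf_p x k = P (cf_a x) k"
  by (induction x k rule: cf_p.induct) auto
lemma cf_q_eq: "cf_q x k = Q (cf_a x) k"
  by (induction x k rule: cf_q.induct) auto
lemma cf_p_prev_eq: "cf_p_prev x k = Pp (cf_a x) k"
  by (simp add: cf_p_prev_def Pp_def cf_p_eq)
lemma cf_q_prev_eq: "cf_q_prev x k = Qp (cf_a x) k"
  by (simp add: cf_q_prev_def Qp_def cf_q_eq)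

lemma P_cong: "(\<forall>i\<le>k. b i = c i) \<Longrightarrow> P b k = P c k"
  by (induction b k rule: P.induct) auto
lemma Q_cong: "(\<forall>i\<le>k. b i = c i) \<Longrightarrow> Q b k = Q c k"
  by (induction b k rule: Q.induct) auto

lemma det: "P b k * Qp b k - Pp b k * Q b k = (-1) ^ (k + 1)"
proof (induction k)
  case 0 then show ?case by (simp add: Pp_def Qp_def)
next
  case (Suc k)
  have "P b (Suc k) * Qp b (Suc k) - Pp b (Suc k) * Q b (Suc k)
      = - (P b k * Qp b k - Pp b k * Q b k)"
    by (simp add: P_Suc Q_Suc algebra_simps)
  then show ?case using Suc by simp
qed

lemma Q_pos: "(\<forall>i. 1 \<le> i \<longrightarrow> i \<le> k \<longrightarrow> b i \<ge> 1) \<Longrightarrow>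
   Q b k \<ge> 1 \<and> Qp b k \<ge> 0 \<and> Qp b k \<le> Q b k"
proof (induction k)
  case 0 then show ?case by (simp add: Qp_def)
next
  case (Suc k)
  then have ih: "Q b k \<ge> 1" "Qp b k \<ge> 0" by auto
  have "b (Suc k) \<ge> 1" using Suc.prems by auto
  then have "b (Suc k) * Q b k \<ge> Q b k" using ih by (metis mult_le_cancel_right1 order.trans zero_le_one not_le less_le_not_le)
  then show ?case using ih unfolding Q_Suc Qp_Suc by linarith
qed

lemma V_Suc: "w \<noteq> 0 \<Longrightarrow> V b (Suc k) w = V b k (of_int (b (Suc k)) + 1 / w)"
proof -
  assume w: "w \<noteq> 0"
  have n: "of_int (P b (Suc k)) * w + of_int (Pp b (Suc k))
     = w * (of_int (P b k) * (of_int (b (Suc k)) + 1 / w) + of_int (Pp b k))"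
    using w by (simp add: P_Suc algebra_simps)
  have d: "of_int (Q b (Suc k)) * w + of_int (Qp b (Suc k))
     = w * (of_int (Q b k) * (of_int (b (Suc k)) + 1 / w) + of_int (Qp b k))"
    using w by (simp add: Q_Suc algebra_simps)
  show ?thesis unfolding V_def n d using w by simp
qed

lemma cf_rem_gt1: "cf_defined x (Suc i) \<Longrightarrow> cf_rem x (Suc i) > 1"
proof -
  assume "cf_defined x (Suc i)"
  then have "cf_rem x i \<notin> \<int>" by (simp add: cf_defined_def)
  then have "frac (cf_rem x i) > 0" "frac (cf_rem x i) < 1"
    by (simp_all add: frac_gt_0_iff frac_lt_1)
  then show ?thesis by simp
qed

lemma cf_defined_mono: "cf_defined x m \<Longrightarrow> i \<le> m \<Longrightarrow> cf_defined x i"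
  by (auto simp: cf_defined_def)

lemma forward: "cf_defined x (Suc k) \<Longrightarrow> x = V (cf_a x) k (cf_rem x (Suc k))"
proof (induction k)
  case 0
  then have "x \<notin> \<int>" by (simp add: cf_defined_def)
  then have f: "frac x > 0" by (simp add: frac_gt_0_iff)
  have "x = of_int (cf_a x 0) + frac x" by (simp add: cf_a_def frac_def)
  then show ?case using f by (simp add: V_def Pp_def Qp_def field_simps)
next
  case (Suc k)
  then have ih: "x = V (cf_a x) k (cf_rem x (Suc k))"
    using cf_defined_mono by fastforce
  have "cf_rem x (Suc k) \<notin> \<int>" using Suc.prems unfolding cf_defined_def by blast
  then have f: "frac (cf_rem x (Suc k)) > 0" by (simp add: frac_gt_0_iff)
  have e: "cf_rem x (Suc k) = of_int (cf_a x (Suc k)) + 1 / cf_rem x (Suc (Suc k))"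
    using f by (simp add: cf_a_def frac_def)
  have "cf_rem x (Suc (Suc k)) \<noteq> 0" using f by simp
  then show ?case using ih e V_Suc by metis
qed

lemma floor_frac_aux:
  fixes w :: real assumes "w > 1"
  shows "\<lfloor>of_int c + 1 / w\<rfloor> = c" "frac (of_int c + 1 / w) = 1 / w"
    "of_int c + 1 / w \<notin> \<int>"
proof -
  have a: "0 < 1 / w" "1 / w < 1" using assms by auto
  show "\<lfloor>of_int c + 1 / w\<rfloor> = c" using a by (simp add: floor_unique)
  then show f: "frac (of_int c + 1 / w) = 1 / w" by (simp add: frac_def)
  show "of_int c + 1 / w \<notin> \<int>" using a f by (metis frac_gt_0_iff)
qed

lemma reconstruct:
  assumes "\<forall>i. 1 \<le> i \<longrightarrow> i \<le> k \<longrightarrow> b i \<ge> 1" "w > 1" "y = V b k w"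
  shows "(\<forall>i\<le>k. cf_a y i = b i) \<and> cf_defined y (Suc k) \<and> cf_rem y (Suc k) = w"
  using assms
proof (induction k arbitrary: w)
  case 0
  then have y: "y = of_int (b 0) + 1 / w" by (simp add: V_def Pp_def Qp_def field_simps)
  note F = floor_frac_aux[OF 0(2), of "b 0"]
  show ?case using F y by (simp add: cf_a_def cf_defined_def)
next
  case (Suc k)
  define w' where "w' = of_int (b (Suc k)) + 1 / w"
  have b1: "b (Suc k) \<ge> 1" using Suc.prems by auto
  have "real_of_int (b (Suc k)) \<ge> 1" "1 / w > 0" using b1 Suc.prems(2) by auto
  then have w'1: "w' > 1" unfolding w'_def by linarith
  have "y = V b k w'" using Suc.prems V_Suc[of w b k] by (simp add: w'_def)
  with Suc.IH[of w'] Suc.prems w'1 have ih: "\<forall>i\<le>k. cf_a y i = b i" "cf_defined y (Suc k)"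
      "cf_rem y (Suc k) = w'" by auto
  note F = floor_frac_aux[OF Suc.prems(2), of "b (Suc k)", folded w'_def]
  have "cf_a y (Suc k) = b (Suc k)" using ih F by (simp add: cf_a_def)
  moreover have "cf_defined y (Suc (Suc k))" using ih(2,3) F
    unfolding cf_defined_def by (auto simp del: cf_rem.simps simp: less_Suc_eq)
  moreover have "cf_rem y (Suc (Suc k)) = w" using ih F Suc.prems(2) by simp
  ultimately show ?case using ih(1) le_Suc_eq by auto
qed

lemma cf_rem_shift: "cf_rem x (Suc m) = cf_rem (cf_rem x 1) m"
  by (induction m) auto

lemma terminates:
  fixes d :: nat
  shows "d > 0 \<Longrightarrow> \<exists>m. cf_defined (of_int c / of_nat d) m \<and> cf_rem (of_int c / of_nat d) m \<in> \<int>"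
proof (induction d arbitrary: c rule: less_induct)
  case (less d)
  define x where "x = (of_int c / of_nat d :: real)"
  show ?case
  proof (cases "x \<in> \<int>")
    case True
    then show ?thesis by (auto simp: x_def cf_defined_def)
  next
    case False
    define e where "e = c mod int d"
    have fl: "\<lfloor>x\<rfloor> = c div int d" unfolding x_def
      by (metis floor_divide_of_int_eq of_int_of_nat_eq)
    have ce: "c = int d * (c div int d) + e" by (simp add: e_def)
    have fr: "frac x = of_int e / of_nat d"
    proof -
      have "frac x = x - of_int (c div int d)" using fl by (simp add: frac_def)
      also have "\<dots> = of_int e / of_nat d"
        using less.prems unfolding x_def by (subst ce) (simp add: field_simps)
      finally show ?thesis .
    qed
    have e0: "e \<ge> 0" "e < int d" using less.prems by (simp_all add: e_def)
    have "e \<noteq> 0" using False fr by (metis div_0 frac_eq_0_iff of_int_0)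
    with e0 have epos: "e > 0" by simp
    have r1: "cf_rem x 1 = of_int (int d) / of_nat (nat e)"
      using fr epos by simp
    have "nat e < d" using e0 epos by linarith
    then obtain m where m: "cf_defined (cf_rem x 1) m" "cf_rem (cf_rem x 1) m \<in> \<int>"
      using less.IH[of "nat e" "int d"] epos r1 by auto
    have "cf_defined x (Suc m)"
      unfolding cf_defined_def
    proof (intro allI impI)
      fix i assume "i < Suc m"
      then show "cf_rem x i \<notin> \<int>"
      proof (cases i)
        case 0 then show ?thesis using False by simp
      next
        case (Suc i')
        then show ?thesis using m(1) \<open>i < Suc m\<close> cf_rem_shift[of x i']
          unfolding cf_defined_def by (simp del: cf_rem.simps)
      qed
    qed
    moreover have "cf_rem x (Suc m) \<in> \<int>" using m(2) cf_rem_shift[of x m] by (simp del: cf_rem.simps)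
    ultimately show ?thesis unfolding x_def by blast
  qed
qed


lemma final:
  fixes \<alpha> :: real and k n q' j :: nat and b :: "nat \<Rightarrow> int"
  assumes def: "cf_defined \<alpha> (Suc k)" and qk: "cf_q \<alpha> k = int n * int q'" and q'1: "q' > 1"
    and bpos: "\<forall>i. 1 \<le> i \<longrightarrow> i \<le> j \<longrightarrow> b i \<ge> 1"
    and Pj: "P b j = cf_p \<alpha> k" and Qj: "Q b j = int q'"
    and Qp0: "0 \<le> Qp b j" and Qpl: "Qp b j < int q'" and par: "even (j + k)"
  shows "cf_B (real n * \<alpha>) \<ge> enat (n * nat (cf_a \<alpha> (k + 1)))
     \<and> is_cf_convergent (real n * \<alpha>) (real_of_int (cf_p \<alpha> k) / real q')"
proof -
  define r where "r = cf_rem \<alpha> (Suc k)"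
  define p where "p = cf_p \<alpha> k"
  define pp where "pp = cf_p_prev \<alpha> k"
  define qq where "qq = cf_q_prev \<alpha> k"
  define qk where "qk = cf_q \<alpha> k"
  have r1: "r > 1" using cf_rem_gt1[OF def] by (simp add: r_def)
  have aV: "\<alpha> = (of_int p * r + of_int pp) / (of_int qk * r + of_int qq)"
    using forward[OF def] unfolding V_def r_def p_def pp_def qq_def qk_def
    cf_p_eq cf_q_eq cf_p_prev_eq cf_q_prev_eq by simp
  have posa: "\<forall>i. 1 \<le> i \<longrightarrow> i \<le> k \<longrightarrow> cf_a \<alpha> i \<ge> 1"
  proof (intro allI impI)
    fix i assume i: "1 \<le> i" "i \<le> k"
    then obtain i' where i': "i = Suc i'" by (cases i) auto
    have "cf_defined \<alpha> (Suc i')" using def i i' cf_defined_mono by simp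
    then have "cf_rem \<alpha> i > 1" using cf_rem_gt1 i' by simp
    then show "cf_a \<alpha> i \<ge> 1" unfolding cf_a_def by linarith
  qed
  have QQ: "qk \<ge> 1" "qq \<ge> 0"
    using Q_pos[OF posa] unfolding qk_def qq_def cf_q_eq cf_q_prev_eq by auto
  have n1: "n \<ge> 1" using QQ qk unfolding qk_def by (cases n) auto
  have Epos: "of_int qk * r + of_int qq > 0"
  proof -
    have "of_int qk * r > 0" using QQ r1 by simp
    moreover have "real_of_int qq \<ge> 0" using QQ by simp
    ultimately show ?thesis by linarith
  qed
  have detA: "p * qq - pp * qk = (-1) ^ (k + 1)"
    using det[of "cf_a \<alpha>" k] unfolding p_def qq_def pp_def qk_def
      cf_p_eq cf_q_eq cf_p_prev_eq cf_q_prev_eq .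
  have sgn: "(-1::int) ^ (j + 1) = (-1) ^ (k + 1)"
  proof -
    have "even (j + 1) \<longleftrightarrow> even (k + 1)" using par by auto
    then show ?thesis by (simp add: minus_one_power_iff)
  qed
  have detB: "p * Qp b j - Pp b j * int q' = (-1) ^ (k + 1)"
    using det[of b j] sgn unfolding Pj Qj p_def by simp
  define D where "D = qq - Qp b j"
  have keyD: "p * D = int q' * (int n * pp - Pp b j)"
  proof -
    have "p * D = pp * qk - Pp b j * int q'"
      using detA detB unfolding D_def right_diff_distrib by linarith
    then show ?thesis by (simp add: qk_def qk algebra_simps)
  qed
  have cop: "coprime p (int q')"
  proof (rule coprimeI)
    fix c assume c: "c dvd p" "c dvd int q'"
    then have "c dvd qk" using qk by (simp add: qk_def)
    then have "c dvd p * qq - pp * qk" using c by simp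
    then have "c dvd (-1) ^ (k + 1)" using detA by simp
    moreover have "is_unit ((-1::int) ^ (k + 1))" by (simp add: is_unit_power_iff)
    ultimately show "is_unit c" by (rule dvd_unit_imp_unit)
  qed
  have "int q' dvd p * D" unfolding keyD by simp
  moreover have "coprime (int q') p" using cop by (simp add: coprime_commute)
  ultimately have "int q' dvd D" by (simp add: coprime_dvd_mult_right_iff)
  then obtain t where t: "D = int q' * t" by blast
  have "D > - int q'" using QQ Qpl unfolding D_def by simp
  have "t \<ge> 0"
  proof (rule ccontr)
    assume "\<not> t \<ge> 0"
    then have "t \<le> -1" by simp
    then have "int q' * t \<le> int q' * (-1)" by (rule mult_left_mono) simp
    then show False using \<open>D > - int q'\<close> t by simp
  qed
  then have D0: "D \<ge> 0" using t by simp
  define w where "w = real n * r + of_int D / real q'"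
  have wge: "w \<ge> real n * r" using D0 q'1 by (simp add: w_def)
  have "real n * r \<ge> r" using n1 r1 by simp
  then have w1: "w > 1" using wge r1 by linarith
  have q'pos: "real q' > 0" using q'1 by simp
  have e1: "of_int (Q b j) * w + of_int (Qp b j) = of_int qk * r + of_int qq"
  proof -
    have "of_int (Q b j) * w = real q' * real n * r + of_int D"
      using q'pos unfolding Qj w_def by (simp add: field_simps)
    moreover have "real_of_int qk = real q' * real n" using qk by (simp add: qk_def)
    ultimately show ?thesis by (simp add: D_def)
  qed
  have e2: "of_int (P b j) * w + of_int (Pp b j) = real n * (of_int p * r + of_int pp)"
  proof -
    have "of_int p * (of_int D / real q') = real_of_int (p * D) / real q'" by simp
    also have "\<dots> = real n * of_int pp - of_int (Pp b j)" using q'pos unfolding keyD by simp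
    finally have "of_int p * (of_int D / real q') = real n * of_int pp - of_int (Pp b j)" .
    then show ?thesis unfolding Pj p_def[symmetric] w_def by (simp add: algebra_simps)
  qed
  define y where "y = real n * \<alpha>"
  have yV: "y = V b j w" unfolding V_def e1 e2 y_def using aV by simp
  note R = reconstruct[OF bpos w1 yV]
  have cpy: "cf_p y j = p" using R P_cong[of j "cf_a y" b] Pj by (simp add: cf_p_eq p_def)
  have cqy: "cf_q y j = int q'" using R Q_cong[of j "cf_a y" b] Qj by (simp add: cf_q_eq)
  have conv: "is_cf_convergent y (real_of_int p / real q')"
    unfolding is_cf_convergent_def using R cf_defined_mono[of y "Suc j" j] cpy cqy by auto
  have "real_of_int (cf_a \<alpha> (Suc k)) \<le> r" unfolding cf_a_def r_def by simp
  then have "real n * real_of_int (cf_a \<alpha> (Suc k)) \<le> real n * r" by (simp add: mult_left_mono)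
  then have "real_of_int (int n * cf_a \<alpha> (Suc k)) \<le> w" using wge by simp
  then have fl: "int n * cf_a \<alpha> (Suc k) \<le> cf_a y (Suc j)"
    using R unfolding cf_a_def by (simp add: le_floor_iff)
  have "n * nat (cf_a \<alpha> (Suc k)) \<le> nat (cf_a y (Suc j))"
  proof -
    have "nat (int n * cf_a \<alpha> (Suc k)) = n * nat (cf_a \<alpha> (Suc k))"
      by (simp add: nat_mult_distrib)
    then show ?thesis using fl by (metis nat_mono)
  qed
  moreover have "enat (nat (cf_a y (Suc j))) \<le> cf_B y"
    unfolding cf_B_def using R by (intro SUP_upper) auto
  ultimately have "enat (n * nat (cf_a \<alpha> (Suc k))) \<le> cf_B y"
    by (meson enat_ord_simps(1) order_trans)
  then show ?thesis using conv unfolding y_def p_def by simp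
qed


lemma cf_a_ge1: "cf_defined x m \<Longrightarrow> 1 \<le> i \<Longrightarrow> i \<le> m \<Longrightarrow> cf_a x i \<ge> 1"
proof -
  assume d: "cf_defined x m" and i: "1 \<le> i" "i \<le> m"
  then obtain i' where i': "i = Suc i'" by (cases i) auto
  have "cf_defined x (Suc i')" using d i i' cf_defined_mono by simp
  then have "cf_rem x i > 1" using cf_rem_gt1 i' by simp
  then show "cf_a x i \<ge> 1" unfolding cf_a_def by linarith
qed

lemma coprime_from_det: "a * b - c * d = (-1) ^ k \<Longrightarrow> coprime (a::int) d"
proof (rule coprimeI)
  fix e assume h: "a * b - c * d = (-1) ^ k" and e: "e dvd a" "e dvd d"
  have "e dvd a * b - c * d" using e by simp
  then have "e dvd (-1) ^ k" by (simp only: h)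
  moreover have "is_unit ((-1::int) ^ k)" by (simp add: is_unit_power_iff)
  ultimately show "is_unit e" by (rule dvd_unit_imp_unit)
qed

lemma eq_frac:
  fixes a b c d :: int
  assumes "coprime a b" "coprime c d" "b > 0" "d > 0"
    "real_of_int a / real_of_int b = real_of_int c / real_of_int d"
  shows "a = c \<and> b = d"
proof -
  have "real_of_int (a * d) = real_of_int (c * b)" using assms(3-5) by (simp add: field_simps)
  then have ad: "a * d = c * b" by (simp only: of_int_eq_iff)
  have "b dvd a * d" using ad by simp
  then have "b dvd d" using assms(1) by (simp add: coprime_commute coprime_dvd_mult_right_iff)
  moreover have "d dvd c * b" using ad by (metis dvd_triv_right)
  then have "d dvd b" using assms(2) by (simp add: coprime_commute coprime_dvd_mult_right_iff)
  ultimately have bd: "b = d" using assms(3,4) by (simp add: zdvd_antisym_nonneg)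
  then show ?thesis using ad assms(4) by simp
qed

theorem proposition3p6:
  fixes \<alpha> :: real and k n q' :: nat
  assumes "\<alpha> > 0"
    and "cf_defined \<alpha> (k + 1)"
    and "cf_q \<alpha> k = int n * int q'"
    and "q' > 1"
  shows "cf_B (real n * \<alpha>) \<ge> enat (n * nat (cf_a \<alpha> (k + 1)))
     \<and> is_cf_convergent (real n * \<alpha>) (real_of_int (cf_p \<alpha> k) / real q')"
proof -
  have def: "cf_defined \<alpha> (Suc k)" using assms(2) by simp
  define p where "p = cf_p \<alpha> k"
  have "coprime p (cf_q \<alpha> k)"
    using det[of "cf_a \<alpha>" k] coprime_from_det
    unfolding p_def cf_p_eq cf_q_eq by (metis mult.commute)
  then have cop: "coprime p (int q')" using assms(3)
    by (metis coprime_commute coprime_mult_left_iff)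
  define x0 where "x0 = real_of_int p / real q'"
  obtain m where m: "cf_defined x0 m" "cf_rem x0 m \<in> \<int>"
    using terminates[of q' p] assms(4) unfolding x0_def by auto
  define c where "c = cf_a x0"
  have "m \<noteq> 0"
  proof
    assume "m = 0"
    then have "x0 \<in> \<int>" using m by simp
    then obtain z where z: "x0 = of_int z" by (metis Ints_cases)
    then have "real_of_int p = real_of_int (z * int q')" using assms(4) by (simp add: x0_def field_simps)
    then have "p = z * int q'" by (simp only: of_int_eq_iff)
    then have "int q' dvd p" by simp
    then have "is_unit (int q')" using cop by (metis coprime_absorb_left coprime_commute)
    then show False using assms(4) by simp
  qed
  then obtain m' where m': "m = Suc m'" by (cases m) auto
  have cpos: "\<forall>i. 1 \<le> i \<longrightarrow> i \<le> m \<longrightarrow> c i \<ge> 1" using cf_a_ge1[OF m(1)] by (simp add: c_def)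
  have rg: "cf_rem x0 m > 1" using cf_rem_gt1 m(1) m' by simp
  have cm: "of_int (c m) = cf_rem x0 m" using m(2) unfolding c_def cf_a_def
    by (metis Ints_cases floor_of_int)
  then have cm2: "c m \<ge> 2" using rg by linarith
  have "x0 = V c m' (cf_rem x0 m)" using forward[of x0 m'] m(1) m' by (simp add: c_def)
  also have "\<dots> = V c m' (of_int (c m))" by (simp only: cm)
  also have "\<dots> = real_of_int (P c m) / real_of_int (Q c m)"
    unfolding V_def using P_Suc[of c m'] Q_Suc[of c m'] m' by (simp add: algebra_simps)
  finally have x0e: "x0 = real_of_int (P c m) / real_of_int (Q c m)" .
  have QP: "Q c m \<ge> 1" "Qp c m \<ge> 0" "Qp c m \<le> Q c m" using Q_pos[OF cpos] by auto
  have QP': "Q c m' \<ge> 1" using Q_pos[of m' c] cpos m' by auto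
  have copm: "coprime (P c m) (Q c m)" using det[of c m] coprime_from_det by (metis mult.commute)
  have PQ: "P c m = p \<and> Q c m = int q'"
    using eq_frac[OF copm cop] QP assms(4) x0e unfolding x0_def by simp
  have QS: "Q c m = c m * Q c m' + Qp c m'" using Q_Suc[of c m'] m' by simp
  have PS: "P c m = c m * P c m' + Pp c m'" using P_Suc[of c m'] m' by simp
  have Qpm: "Qp c m = Q c m'" using m' by simp
  have Qp'0: "Qp c m' \<ge> 0" using Q_pos[of m' c] cpos m' by auto
  have "c m * Q c m' \<ge> 2 * Q c m'" using cm2 QP' by (intro mult_right_mono) auto
  then have Qlt: "Q c m' < Q c m" using QS Qp'0 QP' by linarith
  show ?thesis
  proof (cases "even (m + k)")
    case True
    show ?thesis
      by (rule final[OF def assms(3) assms(4) cpos]) (use PQ QP Qpm Qlt True p_def in auto)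
  next
    case False
    define b where "b = c(m := c m - 1, Suc m := 1)"
    have bc: "\<forall>i\<le>m'. b i = c i" using m' by (auto simp: b_def)
    have bpos: "\<forall>i. 1 \<le> i \<longrightarrow> i \<le> Suc m \<longrightarrow> b i \<ge> 1"
      using cpos cm2 by (auto simp: b_def le_Suc_eq)
    have Pb: "P b m' = P c m'" "Pp b m' = Pp c m'" using bc P_cong[of m' b c] P_cong[of "m' - 1" b c]
      by (auto simp: Pp_def)
    have Qb: "Q b m' = Q c m'" "Qp b m' = Qp c m'" using bc Q_cong[of m' b c] Q_cong[of "m' - 1" b c]
      by (auto simp: Qp_def)
    have bm: "b m = c m - 1" "b (Suc m) = 1" by (auto simp: b_def)
    have Pbm: "P b m = (c m - 1) * P c m' + Pp c m'" using P_Suc[of b m'] m' Pb bm by simp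
    have Qbm: "Q b m = (c m - 1) * Q c m' + Qp c m'" using Q_Suc[of b m'] m' Qb bm by simp
    have PbS: "P b (Suc m) = P c m"
      using P_Suc[of b m] bm Pbm PS Pb m' by (simp add: algebra_simps)
    have QbS: "Q b (Suc m) = Q c m"
      using Q_Suc[of b m] bm Qbm QS Qb m' by (simp add: algebra_simps)
    have Qpb: "Qp b (Suc m) = Q c m - Q c m'" using Qbm QS by (simp add: algebra_simps)
    show ?thesis
      by (rule final[OF def assms(3) assms(4) bpos]) (use PQ PbS QbS Qpb QP Qpm QP' False p_def in auto)
  qed
qed

end
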